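(* Let $k$ be a positive definite kernel on a set $\mathcal{X}$ and $k^\Delta$ the induced dueling kernel on $\mathcal{X}^2$. Let $\{(x_i,x'_i,y_i)\}_{i=1}^t$ be an observation set with $y_i\in\{0,1\}$, and let $h_t$ and $k^\Delta_t$ be the predictor and posterior covariance defined in the context. Let $\tilde h_t\sim\mathrm{GP}(h_t,v_t^2k^\Delta_t)$ be a Gaussian process sample on $\mathcal{X}^2$, where $v_t$ is a fixed (deterministic) sequence. Then there exists a function $\tilde f_t$ on $\mathcal{X}$ such that for all $(x,x')\in\mathcal{X}^2$, almost surely, $\tilde h_t(x,x')=\tilde f_t(x)-\tilde f_t(x')$.
   Context: The dueling kernel is $k^\Delta((x_1,x'_1),(x_2,x'_2))=k(x_1,x_2)+k(x'_1,x'_2)-k(x_1,x'_2)-k(x'_1,x_2)$, with RKHS $\mathcal{H}_{k^\Delta}$. With $\mu(u)=(1+e^{-u})^{-1}$ and $\lambda>0$, $h_t=\arg\min_{g\in\mathcal{H}_{k^\Delta}}\sum_{i=1}^t[-y_i\log\mu(g(x_i,x'_i))-(1-y_i)\log(1-\mu(g(x_i,x'_i)))]+\frac{\lambda}{2}\|g\|^2_{\mathcal{H}_{k^\Delta}}$. With $z_i=(x_i,x'_i)$, $k^\Delta_t(z)=[k^\Delta(z,z_j)]_{j=1}^t$, $K^\Delta_t=[k^\Delta(z_i,z_j)]_{i,j}$ and a constant $\kappa>0$, $k^\Delta_t(z,z')=k^\Delta(z,z')-k^\Delta_t(z)^\top(K^\Delta_t+\lambda\kappa I)^{-1}k^\Delta_t(z')$.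 *)

theory Defs
  imports "HOL-Probability.Probability" "Jordan_Normal_Form.Gauss_Jordan_Elimination"
begin

text \<open>Positive definite (= positive semidefinite, symmetric) kernel on a type.\<close>
definition pd_kernel :: "('b \<Rightarrow> 'b \<Rightarrow> real) \<Rightarrow> bool" where
  "pd_kernel K \<longleftrightarrow> (\<forall>x y. K x y = K y x) \<and>
     (\<forall>(n::nat) (a::nat \<Rightarrow> real) (z::nat \<Rightarrow> 'b).
        (\<Sum>i<n. \<Sum>j<n. a i * a j * K (z i) (z j)) \<ge> 0)"

definition dueling_kernel :: "('a \<Rightarrow> 'a \<Rightarrow> real) \<Rightarrow> ('a \<times> 'a) \<Rightarrow> ('a \<times> 'a) \<Rightarrow> real" where
  "dueling_kernel k z1 z2 =
     k (fst z1) (fst z2) + k (snd z1) (snd z2) - k (fst z1) (snd z2) - k (snd z1) (fst z2)"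

text \<open>A finite linear combination of kernel sections, as a list of (coefficient, centre).\<close>
definition pre_eval :: "('b \<Rightarrow> 'b \<Rightarrow> real) \<Rightarrow> (real \<times> 'b) list \<Rightarrow> 'b \<Rightarrow> real" where
  "pre_eval K F z = (\<Sum>(a,p)\<leftarrow>F. a * K p z)"

definition pre_norm2 :: "('b \<Rightarrow> 'b \<Rightarrow> real) \<Rightarrow> (real \<times> 'b) list \<Rightarrow> real" where
  "pre_norm2 K F = (\<Sum>(a,p)\<leftarrow>F. \<Sum>(b,q)\<leftarrow>F. a * b * K p q)"

definition pre_diff :: "(real \<times> 'b) list \<Rightarrow> (real \<times> 'b) list \<Rightarrow> (real \<times> 'b) list" where
  "pre_diff F G = F @ map (\<lambda>(a,p). (- a, p)) G"

definition rkhs_approx :: "('b \<Rightarrow> 'b \<Rightarrow> real) \<Rightarrow> (nat \<Rightarrow> (real \<times> 'b) list) \<Rightarrow> ('b \<Rightarrow> real) \<Rightarrow> bool" where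
  "rkhs_approx K F g \<longleftrightarrow>
     (\<forall>e>0. \<exists>N. \<forall>m\<ge>N. \<forall>n\<ge>N. pre_norm2 K (pre_diff (F m) (F n)) < e) \<and>
     (\<forall>z. (\<lambda>n. pre_eval K (F n) z) \<longlonglongrightarrow> g z)"

definition rkhs :: "('b \<Rightarrow> 'b \<Rightarrow> real) \<Rightarrow> ('b \<Rightarrow> real) set" where
  "rkhs K = {g. \<exists>F. rkhs_approx K F g}"

text \<open>Squared RKHS norm: limit of the pre-Hilbert norms of an approximating sequence
  (independent of the chosen sequence for a positive definite kernel).\<close>
definition rkhs_norm2 :: "('b \<Rightarrow> 'b \<Rightarrow> real) \<Rightarrow> ('b \<Rightarrow> real) \<Rightarrow> real" where
  "rkhs_norm2 K g = Inf {L. \<exists>F. rkhs_approx K F g \<and> (\<lambda>n. pre_norm2 K (F n)) \<longlonglongrightarrow> L}"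

definition sigmoid :: "real \<Rightarrow> real" where
  "sigmoid u = 1 / (1 + exp (- u))"

definition dueling_objective ::
  "('a \<Rightarrow> 'a \<Rightarrow> real) \<Rightarrow> real \<Rightarrow> nat \<Rightarrow> (nat \<Rightarrow> 'a \<times> 'a) \<Rightarrow> (nat \<Rightarrow> real)
     \<Rightarrow> ('a \<times> 'a \<Rightarrow> real) \<Rightarrow> real" where
  "dueling_objective k lam t zs ys g =
     (\<Sum>i<t. - ys i * ln (sigmoid (g (zs i))) - (1 - ys i) * ln (1 - sigmoid (g (zs i))))
     + lam / 2 * rkhs_norm2 (dueling_kernel k) g"

text \<open>Observations are indexed \<open>0..<t\<close>.\<close>
definition gram_reg :: "('a \<Rightarrow> 'a \<Rightarrow> real) \<Rightarrow> real \<Rightarrow> real \<Rightarrow> nat \<Rightarrow> (nat \<Rightarrow> 'a \<times> 'a) \<Rightarrow> real mat" where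
  "gram_reg k lam kap t zs =
     mat t t (\<lambda>(i,j). dueling_kernel k (zs i) (zs j)) + (lam * kap) \<cdot>\<^sub>m 1\<^sub>m t"

definition post_cov ::
  "('a \<Rightarrow> 'a \<Rightarrow> real) \<Rightarrow> real \<Rightarrow> real \<Rightarrow> nat \<Rightarrow> (nat \<Rightarrow> 'a \<times> 'a)
     \<Rightarrow> 'a \<times> 'a \<Rightarrow> 'a \<times> 'a \<Rightarrow> real" where
  "post_cov k lam kap t zs z z' =
     (let A = the (mat_inverse (gram_reg k lam kap t zs)) in
      dueling_kernel k z z'
      - (\<Sum>i<t. \<Sum>j<t. dueling_kernel k z (zs i) * A $$ (i,j) * dueling_kernel k (zs j) z'))"

definition normal_rv :: "'w measure \<Rightarrow> ('w \<Rightarrow> real) \<Rightarrow> real \<Rightarrow> real \<Rightarrow> bool" where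
  "normal_rv M X \<mu> s2 \<longleftrightarrow> X \<in> borel_measurable M \<and>
     (if s2 = 0 then (AE \<omega> in M. X \<omega> = \<mu>)
      else s2 > 0 \<and> distributed M lborel X (normal_density \<mu> (sqrt s2)))"

text \<open>\<open>H\<close> is a Gaussian process with mean \<open>m\<close> and covariance \<open>C\<close>: all finite-dimensional
  marginals are jointly Gaussian, i.e. every finite linear combination is normal with the
  corresponding mean and variance.\<close>
definition gaussian_process ::
  "'w measure \<Rightarrow> ('w \<Rightarrow> 'b \<Rightarrow> real) \<Rightarrow> ('b \<Rightarrow> real) \<Rightarrow> ('b \<Rightarrow> 'b \<Rightarrow> real) \<Rightarrow> bool" where
  "gaussian_process M H m C \<longleftrightarrow>
     (\<forall>(n::nat) (c::nat \<Rightarrow> real) (p::nat \<Rightarrow> 'b).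
        normal_rv M (\<lambda>\<omega>. \<Sum>i<n. c i * H \<omega> (p i))
          (\<Sum>i<n. c i * m (p i))
          (\<Sum>i<n. \<Sum>j<n. c i * c j * C (p i) (p j)))"

end

theory Submission
  imports Defs
begin

lemma kD_first:
  "dueling_kernel k (x, x') w - dueling_kernel k (x, x0) w + dueling_kernel k (x', x0) w = 0"
  by (simp add: dueling_kernel_def)

lemma kD_second:
  "dueling_kernel k w (x, x') - dueling_kernel k w (x, x0) + dueling_kernel k w (x', x0) = 0"
  by (simp add: dueling_kernel_def)

lemma post_cov_first:
  "post_cov k lam kap t zs (x, x') w - post_cov k lam kap t zs (x, x0) w
     + post_cov k lam kap t zs (x', x0) w = 0"
proof -
  define A where "A = the (mat_inverse (gram_reg k lam kap t zs))"
  let ?D = "dueling_kernel k"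
  have "post_cov k lam kap t zs (x, x') w - post_cov k lam kap t zs (x, x0) w
     + post_cov k lam kap t zs (x', x0) w
     = (?D (x, x') w - ?D (x, x0) w + ?D (x', x0) w)
       - (\<Sum>i<t. \<Sum>j<t. (?D (x, x') (zs i) - ?D (x, x0) (zs i) + ?D (x', x0) (zs i))
            * A $$ (i,j) * ?D (zs j) w)"
    unfolding post_cov_def Let_def A_def[symmetric]
    by (simp add: sum_subtractf sum.distrib algebra_simps)
  also have "\<dots> = 0" by (simp add: kD_first)
  finally show ?thesis .
qed

lemma rkhs_first:
  assumes "g \<in> rkhs (dueling_kernel k)"
  shows "g (x, x') - g (x, x0) + g (x', x0) = 0"
proof -
  obtain F where F: "rkhs_approx (dueling_kernel k) F g" using assms unfolding rkhs_def by blast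
  let ?e = "\<lambda>z n. pre_eval (dueling_kernel k) (F n) z"
  have "\<And>z. ?e z \<longlonglongrightarrow> g z" using F unfolding rkhs_approx_def by blast
  hence L: "(\<lambda>n. ?e (x,x') n - ?e (x,x0) n + ?e (x',x0) n) \<longlonglongrightarrow> g (x, x') - g (x, x0) + g (x', x0)"
    by (intro tendsto_intros)
  have Z: "\<And>G. pre_eval (dueling_kernel k) G (x,x') - pre_eval (dueling_kernel k) G (x,x0)
      + pre_eval (dueling_kernel k) G (x',x0) = 0"
  proof -
    fix G :: "(real \<times> ('a \<times> 'a)) list"
    show "pre_eval (dueling_kernel k) G (x,x') - pre_eval (dueling_kernel k) G (x,x0)
      + pre_eval (dueling_kernel k) G (x',x0) = 0"
      unfolding pre_eval_def
    proof (induction G)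
      case Nil then show ?case by simp
    next
      case (Cons a G)
      obtain c q where a: "a = (c, q)" by (cases a)
      have "c * dueling_kernel k q (x,x') - c * dueling_kernel k q (x,x0) + c * dueling_kernel k q (x',x0) = 0"
        using kD_second[of k q x x' x0]
        by (metis (no_types) mult_zero_right right_diff_distrib distrib_left)
      with Cons show ?case by (simp add: a algebra_simps)
    qed
  qed
  from L show ?thesis by (simp add: Z LIMSEQ_const_iff)
qed

theorem proposition1:
  fixes k :: "'a \<Rightarrow> 'a \<Rightarrow> real"
    and t :: nat and xs xs' :: "nat \<Rightarrow> 'a" and ys :: "nat \<Rightarrow> real"
    and lam kap v :: real
    and h :: "'a \<times> 'a \<Rightarrow> real"
    and M :: "'w measure" and htil :: "'w \<Rightarrow> 'a \<times> 'a \<Rightarrow> real"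
  assumes "pd_kernel k"
    and "\<forall>i<t. ys i \<in> {0, 1}"
    and "lam > 0" and "kap > 0"
    and "h \<in> rkhs (dueling_kernel k)"
    and "\<forall>g\<in>rkhs (dueling_kernel k).
           dueling_objective k lam t (\<lambda>i. (xs i, xs' i)) ys h
           \<le> dueling_objective k lam t (\<lambda>i. (xs i, xs' i)) ys g"
    and "prob_space M"
    and "gaussian_process M htil h
           (\<lambda>z z'. v\<^sup>2 * post_cov k lam kap t (\<lambda>i. (xs i, xs' i)) z z')"
  shows "\<exists>ftil :: 'w \<Rightarrow> 'a \<Rightarrow> real.
           (\<forall>x. (\<lambda>\<omega>. ftil \<omega> x) \<in> borel_measurable M) \<and>
           (\<forall>x x'. AE \<omega> in M. htil \<omega> (x, x') = ftil \<omega> x - ftil \<omega> x')"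
proof -
  define x0 :: 'a where "x0 = undefined"
  define C where "C = (\<lambda>z z'. v\<^sup>2 * post_cov k lam kap t (\<lambda>i. (xs i, xs' i)) z z')"
  have GP: "\<And>n (c::nat\<Rightarrow>real) (p::nat \<Rightarrow> 'a \<times> 'a). normal_rv M (\<lambda>\<omega>. \<Sum>i<n. c i * htil \<omega> (p i))
          (\<Sum>i<n. c i * h (p i)) (\<Sum>i<n. \<Sum>j<n. c i * c j * C (p i) (p j))"
    using assms(8) unfolding gaussian_process_def C_def by blast
  have meas: "(\<lambda>\<omega>. htil \<omega> (x, x0)) \<in> borel_measurable M" for x
    using GP[where n=1 and c="\<lambda>_. 1" and p="\<lambda>_. (x, x0)"] unfolding normal_rv_def by simp
  have ae: "AE \<omega> in M. htil \<omega> (x, x') = htil \<omega> (x, x0) - htil \<omega> (x', x0)" for x x'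
  proof -
    define c :: "nat \<Rightarrow> real" where "c = (\<lambda>i. if i = 1 then -1 else 1)"
    define p where "p = (\<lambda>i::nat. if i = 0 then (x, x') else if i = 1 then (x, x0) else (x', x0))"
    have Q: "C (x, x') w - C (x, x0) w + C (x', x0) w = 0" for w
      using post_cov_first[of k lam kap t "\<lambda>i. (xs i, xs' i)" x x' w x0]
      unfolding C_def by (metis (no_types) mult_zero_right right_diff_distrib distrib_left)
    have s3: "\<And>f :: nat \<Rightarrow> real. (\<Sum>i<3. f i) = f 0 + f 1 + f 2"
      by (simp add: numeral_3_eq_3 numeral_2_eq_2)
    have var: "(\<Sum>i<3. \<Sum>j<3. c i * c j * C (p i) (p j)) = 0"
      using Q[of "(x,x')"] Q[of "(x,x0)"] Q[of "(x',x0)"]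
      by (simp add: s3 c_def p_def)
    have mean: "(\<Sum>i<3. c i * h (p i)) = 0"
      using rkhs_first[OF assms(5), of x x' x0] by (simp add: s3 c_def p_def)
    have "AE \<omega> in M. (\<Sum>i<3. c i * htil \<omega> (p i)) = 0"
      using GP[where n=3 and c=c and p=p] unfolding normal_rv_def var mean by simp
    then show ?thesis
      by eventually_elim (simp add: s3 c_def p_def algebra_simps)
  qed
  show ?thesis
    by (rule exI[of _ "\<lambda>\<omega> x. htil \<omega> (x, x0)"]) (use meas ae in auto)
qed

end
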